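(* Let $L_1, M_1, L_2, M_2$ be Lagrangian subspaces of $(\mathbf R^{2n},\omega)$ such that $L_1, M_1, L_2$ are pairwise transverse and $M_2$ is transverse to $L_1$. If the Maslov form $[L_1,M_1,L_2]$ is positive definite, then the cross ratio $[L_1,M_1,L_2,M_2]$ is a diagonalizable endomorphism of $L_1$. If moreover $M_2$ is transverse to $L_2$ and the Maslov form $[L_2,M_2,L_1]$ is also positive definite, then $[L_1,M_1,L_2,M_2]$ has positive eigenvalues.
   Context: $\omega$ is the standard symplectic form on $\mathbf R^{2n}$, $\omega(x,y)={}^T x\begin{pmatrix}0&\mathrm{Id}\\-\mathrm{Id}&0\end{pmatrix}y$. A Lagrangian is an $n$-dimensional subspace on which $\omega$ vanishes; two Lagrangians are transverse if they intersect trivially. If $M$ is a Lagrangian transverse to a Lagrangian $L_2$ and $L_1$ is a Lagrangian transverse to $L_2$, there is a unique linear map $M_{L_1\to L_2}\colon L_1\to L_2$ with $M=\{e+M_{L_1\to L_2}(e): e\in L_1\}$. For pairwise transverse Lagrangians $L_1,M,L_2$ the Maslov form $[L_1,M,L_2]$ is the (symmetric, nondegenerate) bilinear form on $L_1$ given by $(v,w)\mapsto \omega(v, M_{L_1\to L_2}(w))$. The cross ratio is the endomorphism $[L_1,M_1,L_2,M_2]\mathrel{:=} -\,(M_2)_{L_2\to L_1}\circ (M_1)_{L_1\to L_2}$ of $L_1$. *)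

theory Defs
  imports "HOL-Analysis.Analysis"
begin

text \<open>R^{2n} is modelled as pairs (a,b) of vectors in R^n, i.e. x = (a,b) with a the
  first n coordinates and b the last n coordinates.\<close>

type_synonym 'n sympl = "(real ^ 'n) \<times> (real ^ 'n)"

text \<open>Standard symplectic form: omega(x,y) = x^T J y with J = [[0,Id],[-Id,0]],
  i.e. omega((a,b),(c,d)) = a.d - b.c.\<close>
definition omega :: "'n::finite sympl \<Rightarrow> 'n sympl \<Rightarrow> real" where
  "omega x y = fst x \<bullet> snd y - snd x \<bullet> fst y"

definition lagrangian :: "('n::finite) sympl set \<Rightarrow> bool" where
  "lagrangian L \<longleftrightarrow> subspace L \<and> dim L = CARD('n) \<and> (\<forall>x\<in>L. \<forall>y\<in>L. omega x y = 0)"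

definition transverse :: "('n::finite) sympl set \<Rightarrow> 'n sympl set \<Rightarrow> bool" where
  "transverse L M \<longleftrightarrow> L \<inter> M = {0}"

text \<open>The map M_{L1 -> L2} : L1 -> L2 whose graph {e + M_{L1->L2}(e) : e in L1} is M
  (for e in L1 it is the unique y in L2 with e + y in M; set to 0 outside L1).\<close>
definition graph_map :: "('n::finite) sympl set \<Rightarrow> 'n sympl set \<Rightarrow> 'n sympl set \<Rightarrow> ('n sympl \<Rightarrow> 'n sympl)" where
  "graph_map M L1 L2 = (\<lambda>e. if e \<in> L1 then (THE y. y \<in> L2 \<and> e + y \<in> M) else 0)"

definition maslov_form :: "('n::finite) sympl set \<Rightarrow> 'n sympl set \<Rightarrow> 'n sympl set \<Rightarrow> 'n sympl \<Rightarrow> 'n sympl \<Rightarrow> real" where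
  "maslov_form L1 M L2 v w = omega v (graph_map M L1 L2 w)"

definition pos_def_on :: "('n::finite) sympl set \<Rightarrow> ('n sympl \<Rightarrow> 'n sympl \<Rightarrow> real) \<Rightarrow> bool" where
  "pos_def_on L B \<longleftrightarrow> (\<forall>v\<in>L. v \<noteq> 0 \<longrightarrow> B v v > 0)"

definition cross_ratio :: "('n::finite) sympl set \<Rightarrow> 'n sympl set \<Rightarrow> 'n sympl set \<Rightarrow> 'n sympl set \<Rightarrow> 'n sympl \<Rightarrow> 'n sympl" where
  "cross_ratio L1 M1 L2 M2 = (\<lambda>v. - graph_map M2 L2 L1 (graph_map M1 L1 L2 v))"

definition diagonalizable_on :: "('n::finite) sympl set \<Rightarrow> ('n sympl \<Rightarrow> 'n sympl) \<Rightarrow> bool" where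
  "diagonalizable_on L T \<longleftrightarrow>
     (\<exists>B. independent B \<and> span B = L \<and> (\<forall>b\<in>B. \<exists>c::real. T b = c *\<^sub>R b))"

definition eigenvalue_on :: "('n::finite) sympl set \<Rightarrow> ('n sympl \<Rightarrow> 'n sympl) \<Rightarrow> real \<Rightarrow> bool" where
  "eigenvalue_on L T c \<longleftrightarrow> (\<exists>v\<in>L. v \<noteq> 0 \<and> T v = c *\<^sub>R v)"

end

theory Submission
  imports Defs
begin


lemma omega_add_left: "omega (x + y) z = omega x z + omega y z"
  by (simp add: omega_def inner_add_left)
lemma omega_add_right: "omega x (y + z) = omega x y + omega x z"
  by (simp add: omega_def inner_add_right)
lemma omega_scale_left: "omega (c *\<^sub>R x) z = c * omega x z"
  by (simp add: omega_def algebra_simps)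
lemma omega_scale_right: "omega x (c *\<^sub>R z) = c * omega x z"
  by (simp add: omega_def algebra_simps)
lemma omega_skew: "omega x y = - omega y x"
  by (simp add: omega_def inner_commute)
lemma omega_neg_right: "omega x (- z) = - omega x z"
  by (simp add: omega_def)
lemma omega_diff_right: "omega x (y - z) = omega x y - omega x z"
  by (simp add: omega_def inner_diff_right)
lemma omega_zero_right[simp]: "omega x 0 = 0" by (simp add: omega_def)
lemma omega_zero_left[simp]: "omega 0 x = 0" by (simp add: omega_def)

lemma dim0: "dim {0::'a::euclidean_space} = 0"
  by simp

lemma graph_fun:
  fixes M L :: "'a::euclidean_space set"
  assumes M: "subspace M" and L: "subspace L" and tr: "M \<inter> L = {0}"
    and d: "dim M + dim L = DIM('a)"
  shows "(THE y. y \<in> L \<and> e + y \<in> M) \<in> L \<and> e + (THE y. y \<in> L \<and> e + y \<in> M) \<in> M"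
    and "linear (\<lambda>e. THE y. y \<in> L \<and> e + y \<in> M)"
proof -
  let ?S = "{x + y |x y. x \<in> M \<and> y \<in> L}"
  have "dim ?S = DIM('a)" using dim_sums_Int[OF M L] tr d by simp
  hence h: "span ?S = UNIV" by (rule dim_eq_full[THEN iffD1])
  have e1: "span ?S = ?S" by (rule span_eq_iff[THEN iffD2, OF subspace_sums[OF M L]])
  have SU: "?S = UNIV" by (rule trans[OF e1[symmetric] h])
  have ex: "\<exists>y. y \<in> L \<and> x + y \<in> M" for x
  proof -
    obtain m y where "x = m + y" "m \<in> M" "y \<in> L" using SU by blast
    thus ?thesis by (intro exI[of _ "-y"]) (auto simp: L subspace_neg)
  qed
  have uq: "y1 = y2" if "y1 \<in> L" "x + y1 \<in> M" "y2 \<in> L" "x + y2 \<in> M" for x y1 y2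
  proof -
    have "y1 - y2 \<in> L" using that L subspace_diff by blast
    moreover have "(x + y1) - (x + y2) \<in> M" using that M subspace_diff by blast
    ultimately have "y1 - y2 \<in> M \<inter> L" by simp
    thus ?thesis using tr by auto
  qed
  have P: "(THE y. y \<in> L \<and> x + y \<in> M) \<in> L \<and> x + (THE y. y \<in> L \<and> x + y \<in> M) \<in> M" for x
    by (rule theI') (use ex uq in blast)
  show "(THE y. y \<in> L \<and> e + y \<in> M) \<in> L \<and> e + (THE y. y \<in> L \<and> e + y \<in> M) \<in> M"
    by (rule P)
  have eq: "(THE y. y \<in> L \<and> x + y \<in> M) = z" if "z \<in> L" "x + z \<in> M" for x z
    using uq[OF _ _ that] P by blast
  define f where "f = (\<lambda>e. THE y. y \<in> L \<and> e + y \<in> M)"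
  have Pf: "f z \<in> L" "z + f z \<in> M" for z using P[of z] unfolding f_def by auto
  have eqf: "f x = z" if "z \<in> L" "x + z \<in> M" for x z using eq[OF that] unfolding f_def .
  have "linear f"
  proof (rule linearI)
    fix x y
    have l: "f x + f y \<in> L" by (rule subspace_add[OF L Pf(1) Pf(1)])
    have m: "(x + f x) + (y + f y) \<in> M" by (rule subspace_add[OF M Pf(2) Pf(2)])
    have q: "x + y + (f x + f y) = (x + f x) + (y + f y)" by (simp add: algebra_simps)
    have "x + y + (f x + f y) \<in> M" unfolding q by (rule m)
    thus "f (x + y) = f x + f y" by (rule eqf[OF l])
  next
    fix c :: real and x
    have l: "c *\<^sub>R f x \<in> L" by (rule subspace_scale[OF L Pf(1)])
    have m: "c *\<^sub>R (x + f x) \<in> M" by (rule subspace_scale[OF M Pf(2)])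
    have q: "c *\<^sub>R x + c *\<^sub>R f x = c *\<^sub>R (x + f x)" by (simp add: scaleR_right_distrib)
    have "c *\<^sub>R x + c *\<^sub>R f x \<in> M" unfolding q by (rule m)
    thus "f (c *\<^sub>R x) = c *\<^sub>R f x" by (rule eqf[OF l])
  qed
  thus "linear (\<lambda>e. THE y. y \<in> L \<and> e + y \<in> M)" unfolding f_def .
qed



lemma eig_exists:
  fixes T :: "'a::euclidean_space \<Rightarrow> 'a" and g :: "'a \<Rightarrow> 'a \<Rightarrow> real"
  assumes lin: "linear T" and gl: "\<And>x. linear (g x)" and gr: "\<And>y. linear (\<lambda>x. g x y)"
    and sym: "\<And>x y. x \<in> L \<Longrightarrow> y \<in> L \<Longrightarrow> g x y = g y x"
    and sa: "\<And>x y. x \<in> L \<Longrightarrow> y \<in> L \<Longrightarrow> g x (T y) = g (T x) y"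
    and pd: "\<And>x. x \<in> L \<Longrightarrow> x \<noteq> 0 \<Longrightarrow> g x x > 0"
    and c1: "continuous_on UNIV (\<lambda>x. g x x)" and c2: "continuous_on UNIV (\<lambda>x. g (T x) x)"
    and S: "subspace S" "S \<subseteq> L" "T ` S \<subseteq> S" "S \<noteq> {0}"
  shows "\<exists>v\<in>S. v \<noteq> 0 \<and> (\<exists>c. T v = c *\<^sub>R v)"
proof -
  have gadd: "g x (y + z) = g x y + g x z" for x y z using linear_add[OF gl] by blast
  have gscale: "g x (c *\<^sub>R y) = c * g x y" for x y c using linear_scale[OF gl] by simp
  have gaddl: "g (y + z) x = g y x + g z x" for x y z using linear_add[OF gr] by blast
  have gscalel: "g (c *\<^sub>R y) x = c * g y x" for x y c using linear_scale[OF gr] by simp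
  have gdiff: "g x (y - z) = g x y - g x z" for x y z using linear_diff[OF gl] by blast
  have gdiffl: "g (y - z) x = g y x - g z x" for x y z using linear_diff[OF gr] by blast
  have g0: "g x 0 = 0" "g 0 x = 0" for x using linear_0[OF gl] linear_0[OF gr] by auto
  define K where "K = S \<inter> sphere 0 1"
  have cK: "compact K" unfolding K_def
    by (intro closed_Int_compact closed_subspace S compact_sphere)
  obtain x where x: "x \<in> S" "x \<noteq> 0" using S(4) subspace_0[OF S(1)] by blast
  have "(1 / norm x) *\<^sub>R x \<in> K" using x subspace_scale[OF S(1)] unfolding K_def by auto
  hence Kne: "K \<noteq> {}" by blast
  have KL: "y \<in> K \<Longrightarrow> y \<in> L \<and> y \<noteq> 0" for y using S(2) unfolding K_def by auto
  define f where "f = (\<lambda>y. g (T y) y / g y y)"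
  have cf: "continuous_on K f" unfolding f_def
    by (intro continuous_on_divide continuous_on_subset[OF c1] continuous_on_subset[OF c2])
       (use KL pd in force)+
  obtain v where v: "v \<in> K" "\<And>y. y \<in> K \<Longrightarrow> f y \<le> f v"
    using continuous_attains_sup[OF cK Kne cf] by blast
  define M where "M = f v"
  have vS: "v \<in> S" and vL: "v \<in> L" and v0: "v \<noteq> 0" using v(1) KL unfolding K_def by auto
  have gvv: "g v v > 0" using pd vL v0 by blast
  have bound: "g (T u) u \<le> M * g u u" if u: "u \<in> S" for u
  proof (cases "u = 0")
    case True thus ?thesis using g0 linear_0[OF lin] by simp
  next
    case False
    define y where "y = (1 / norm u) *\<^sub>R u"
    have yK: "y \<in> K" using u False subspace_scale[OF S(1)] unfolding K_def y_def by auto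
    have guu: "g u u > 0" using pd u S(2) False by blast
    have e1: "g (T y) y = (1/norm u)^2 * g (T u) u"
      unfolding y_def linear_scale[OF lin] gscale gscalel by (simp add: power2_eq_square)
    have e2: "g y y = (1/norm u)^2 * g u u"
      unfolding y_def gscale gscalel by (simp add: power2_eq_square)
    have "f y = g (T u) u / g u u" unfolding f_def e1 e2 using False by simp
    hence "g (T u) u / g u u \<le> M" using v(2)[OF yK] M_def by simp
    thus ?thesis using guu by (simp add: pos_divide_le_eq)
  qed
  define R where "R = (\<lambda>x. T x - M *\<^sub>R x)"
  have RS: "R x \<in> S" if "x \<in> S" for x
    using that S(3) subspace_diff[OF S(1)] subspace_scale[OF S(1)] unfolding R_def by blast
  have Rsa: "g x (R y) = g (R x) y" if "x \<in> L" "y \<in> L" for x y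
    unfolding R_def gdiff gdiffl gscale gscalel using sa[OF that] by simp
  have q: "g (R u) u \<le> 0" if "u \<in> S" for u
    using bound[OF that] unfolding R_def gdiffl gscalel by simp
  have Rvv: "g (R v) v = 0"
    unfolding R_def gdiffl gscalel M_def f_def using gvv by simp
  define w where "w = R v"
  have wS: "w \<in> S" unfolding w_def using RS vS .
  have wL: "w \<in> L" using wS S(2) by blast
  have lin_R: "R (a + b) = R a + R b" "R (c *\<^sub>R a) = c *\<^sub>R R a" for a b c
    unfolding R_def using linear_add[OF lin] linear_scale[OF lin]
    by (auto simp: algebra_simps)
  have expand: "g (R (v + t *\<^sub>R w)) (v + t *\<^sub>R w) = 2 * t * g w w + t^2 * g (R w) w" for t
  proof -
    have "g (R (v + t *\<^sub>R w)) (v + t *\<^sub>R w)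
        = g (R v) v + t * g (R v) w + t * g (R w) v + t * t * g (R w) w"
      unfolding lin_R gadd gaddl gscale gscalel by (simp add: algebra_simps)
    moreover have "g (R w) v = g w (R v)" using Rsa[OF wL vL] by simp
    moreover have "g w (R v) = g w w" unfolding w_def ..
    moreover have "g (R v) w = g w w" unfolding w_def ..
    ultimately show ?thesis using Rvv by (simp add: power2_eq_square algebra_simps)
  qed
  have ineq: "2 * t * g w w + t^2 * g (R w) w \<le> 0" for t
    using q[of "v + t *\<^sub>R w"] expand[of t] subspace_add[OF S(1) vS subspace_scale[OF S(1) wS]]
    by simp
  have "w = 0"
  proof (rule ccontr)
    assume "w \<noteq> 0"
    hence p: "g w w > 0" using pd wL by blast
    define Q where "Q = g (R w) w"
    define t where "t = g w w / (\<bar>Q\<bar> + 1)"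
    have t0: "t > 0" unfolding t_def using p by (simp add: add_pos_nonneg)
    have "t * (\<bar>Q\<bar> + 1) = g w w" proof -
      have "\<bar>Q\<bar> + 1 > 0" using abs_ge_zero[of Q] by linarith
      thus ?thesis unfolding t_def by simp
    qed
    hence "t * \<bar>Q\<bar> < g w w" using t0 by (simp add: algebra_simps)
    moreover have "t * Q \<ge> - (t * \<bar>Q\<bar>)"
    proof -
      have "\<bar>t * Q\<bar> = t * \<bar>Q\<bar>" using t0 by (simp add: abs_mult)
      thus ?thesis using abs_ge_minus_self[of "t * Q"] by linarith
    qed
    ultimately have "t * Q > - g w w" by linarith
    hence "2 * g w w + t * Q > 0" using p by linarith
    hence "t * (2 * g w w + t * Q) > 0" using t0 by simp
    moreover have "t * (2 * g w w + t * Q) = 2 * t * g w w + t^2 * Q"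
      by (simp add: algebra_simps power2_eq_square)
    ultimately show False using ineq[of t] unfolding Q_def by linarith
  qed
  hence "T v = M *\<^sub>R v" unfolding w_def R_def by simp
  thus ?thesis using vS v0 by blast
qed

lemma diag_lemma:
  fixes T :: "'a::euclidean_space \<Rightarrow> 'a" and g :: "'a \<Rightarrow> 'a \<Rightarrow> real"
  assumes lin: "linear T" and gl: "\<And>x. linear (g x)" and gr: "\<And>y. linear (\<lambda>x. g x y)"
    and sym: "\<And>x y. x \<in> L \<Longrightarrow> y \<in> L \<Longrightarrow> g x y = g y x"
    and sa: "\<And>x y. x \<in> L \<Longrightarrow> y \<in> L \<Longrightarrow> g x (T y) = g (T x) y"
    and pd: "\<And>x. x \<in> L \<Longrightarrow> x \<noteq> 0 \<Longrightarrow> g x x > 0"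
    and c1: "continuous_on UNIV (\<lambda>x. g x x)" and c2: "continuous_on UNIV (\<lambda>x. g (T x) x)"
  shows "subspace S \<Longrightarrow> S \<subseteq> L \<Longrightarrow> T ` S \<subseteq> S \<Longrightarrow>
    \<exists>B. independent B \<and> span B = S \<and> (\<forall>b\<in>B. \<exists>c::real. T b = c *\<^sub>R b)"
proof (induction "dim S" arbitrary: S rule: less_induct)
  case less
  show ?case
  proof (cases "S = {0}")
    case True
    thus ?thesis by (intro exI[of _ "{}"]) (auto simp: independent_empty)
  next
    case False
    obtain v c where v: "v \<in> S" "v \<noteq> 0" "T v = c *\<^sub>R v"
      using eig_exists[OF lin gl gr sym sa pd c1 c2 less.prems False] by blast
    have gadd: "g x (y + z) = g x y + g x z" for x y z using linear_add[OF gl] by blast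
    have gscale: "g x (k *\<^sub>R y) = k * g x y" for x y k using linear_scale[OF gl] by simp
    have gscalel: "g (k *\<^sub>R y) x = k * g y x" for x y k using linear_scale[OF gr] by simp
    have gdiff: "g x (y - z) = g x y - g x z" for x y z using linear_diff[OF gl] by blast
    have vL: "v \<in> L" using v less.prems by blast
    have gvv: "g v v > 0" using pd vL v by blast
    define S' where "S' = {w \<in> S. g v w = 0}"
    have sS': "subspace S'" unfolding S'_def subspace_def
      using less.prems(1) linear_0[OF gl] gadd gscale
      by (auto simp: subspace_0 subspace_add subspace_scale)
    have S'S: "S' \<subseteq> S" unfolding S'_def by blast
    have S'L: "S' \<subseteq> L" using S'S less.prems by blast
    have TS': "T ` S' \<subseteq> S'"
    proof
      fix y assume "y \<in> T ` S'"
      then obtain w where w: "w \<in> S'" "y = T w" by blast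
      have wL: "w \<in> L" using w S'L by blast
      have "g v (T w) = g (T v) w" using sa[OF vL wL] .
      also have "\<dots> = c * g v w" using v(3) gscalel by simp
      also have "\<dots> = 0" using w S'_def by simp
      finally show "y \<in> S'" using w less.prems(3) S'S unfolding S'_def by auto
    qed
    have "v \<notin> S'" using gvv unfolding S'_def by auto
    hence "S' \<subset> S" using S'S v by blast
    hence "dim S' < dim S"
      using dim_psubset[of S' S] span_eq_iff[of S'] span_eq_iff[of S] sS' less.prems(1) by metis
    then obtain B' where B': "independent B'" "span B' = S'" "\<forall>b\<in>B'. \<exists>c::real. T b = c *\<^sub>R b"
      using less.hyps[OF _ sS' S'L TS'] by blast
    have vnot: "v \<notin> span B'" using B'(2) \<open>v \<notin> S'\<close> by simp
    have ind: "independent (insert v B')" using independent_insertI[OF vnot B'(1)] .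
    have sp: "span (insert v B') = S"
    proof -
      have "x \<in> S" if xs: "x \<in> span (insert v B')" for x
      proof -
        obtain k where "x - k *\<^sub>R v \<in> S'" using xs B'(2) span_insert[of v B'] by auto
        hence "x - k *\<^sub>R v \<in> S" using S'S by blast
        hence "x - k *\<^sub>R v + k *\<^sub>R v \<in> S"
          using subspace_add[OF less.prems(1)] subspace_scale[OF less.prems(1) v(1)] by blast
        thus ?thesis by simp
      qed
      moreover have "x \<in> span (insert v B')" if "x \<in> S" for x
      proof -
        define k where "k = g v x / g v v"
        have "x - k *\<^sub>R v \<in> S"
          using subspace_diff[OF less.prems(1) that subspace_scale[OF less.prems(1) v(1)]] .
        moreover have "g v (x - k *\<^sub>R v) = 0"
          unfolding gdiff gscale k_def using gvv by simp
        ultimately have "x - k *\<^sub>R v \<in> S'" unfolding S'_def by blast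
        thus ?thesis unfolding span_insert[of v B'] B'(2) by blast
      qed
      ultimately show ?thesis by blast
    qed
    show ?thesis using ind sp B'(3) v(3) by (intro exI[of _ "insert v B'"]) auto
  qed
qed


lemma omega_sym_graph:
  fixes L L' M :: "('n::finite) sympl set"
  assumes "lagrangian L" "lagrangian L'" "lagrangian M"
    and P: "\<And>e. \<phi> e \<in> L' \<and> e + \<phi> e \<in> M"
    and v: "v \<in> L" and w: "w \<in> L"
  shows "omega v (\<phi> w) = omega w (\<phi> v)"
proof -
  have "omega (v + \<phi> v) (w + \<phi> w) = 0" using assms unfolding lagrangian_def by blast
  moreover have "omega v w = 0" using assms unfolding lagrangian_def by blast
  moreover have "omega (\<phi> v) (\<phi> w) = 0" using assms unfolding lagrangian_def by blast
  ultimately have "omega v (\<phi> w) + omega (\<phi> v) w = 0"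
    by (simp add: omega_add_left omega_add_right)
  thus ?thesis using omega_skew[of "\<phi> v" w] by simp
qed

theorem corollary3p4:
  fixes L1 M1 L2 M2 :: "('n::finite) sympl set"
  assumes "lagrangian L1" "lagrangian M1" "lagrangian L2" "lagrangian M2"
    and "transverse L1 M1" "transverse M1 L2" "transverse L1 L2"
    and "transverse M2 L1"
    and "pos_def_on L1 (maslov_form L1 M1 L2)"
  shows "diagonalizable_on L1 (cross_ratio L1 M1 L2 M2) \<and>
         (transverse M2 L2 \<and> pos_def_on L2 (maslov_form L2 M2 L1) \<longrightarrow>
            (\<forall>c. eigenvalue_on L1 (cross_ratio L1 M1 L2 M2) c \<longrightarrow> c > 0))"
proof -
  note lag = assms(1-4)
  have sub: "subspace L1" "subspace M1" "subspace L2" "subspace M2"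
    using lag unfolding lagrangian_def by auto
  have dims: "dim L1 = CARD('n)" "dim M1 = CARD('n)" "dim L2 = CARD('n)" "dim M2 = CARD('n)"
    using lag unfolding lagrangian_def by auto
  have DIMs: "DIM('n sympl) = CARD('n) + CARD('n)" by simp
  define a where "a = (\<lambda>e. THE y. y \<in> L2 \<and> e + y \<in> M1)"
  define b where "b = (\<lambda>e. THE y. y \<in> L1 \<and> e + y \<in> M2)"
  have t1: "M1 \<inter> L2 = {0}" using assms(6) unfolding transverse_def .
  have t2: "M2 \<inter> L1 = {0}" using assms(8) unfolding transverse_def .
  have aP: "\<And>e. a e \<in> L2 \<and> e + a e \<in> M1" and la: "linear a"
    unfolding a_def using graph_fun[OF sub(2) sub(3) t1] dims DIMs by auto
  have bP: "\<And>e. b e \<in> L1 \<and> e + b e \<in> M2" and lb: "linear b"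
    unfolding b_def using graph_fun[OF sub(4) sub(1) t2] dims DIMs by auto
  have gm1: "graph_map M1 L1 L2 v = a v" if "v \<in> L1" for v
    using that unfolding graph_map_def a_def by simp
  have gm2: "graph_map M2 L2 L1 x = b x" if "x \<in> L2" for x
    using that unfolding graph_map_def b_def by simp
  have symA: "omega v (a w) = omega w (a v)" if "v \<in> L1" "w \<in> L1" for v w
    using omega_sym_graph[OF lag(1) lag(3) lag(2) aP that] .
  have symB: "omega v (b w) = omega w (b v)" if "v \<in> L2" "w \<in> L2" for v w
    using omega_sym_graph[OF lag(3) lag(1) lag(4) bP that] .
  define g where "g = (\<lambda>x y. omega x (a y))"
  define T where "T = (\<lambda>v. - b (a v))"
  have lT: "linear T" unfolding T_def
    using linear_compose[OF la lb] linear_compose_neg by (auto simp: o_def)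
  have gl: "linear (g x)" for x
    unfolding g_def
    by (rule linearI) (simp_all add: linear_add[OF la] linear_scale[OF la]
        omega_add_right omega_scale_right)
  have gr: "linear (\<lambda>x. g x y)" for y
    unfolding g_def
    by (rule linearI) (simp_all add: omega_add_left omega_scale_left)
  have sym: "g x y = g y x" if "x \<in> L1" "y \<in> L1" for x y
    unfolding g_def using symA[OF that] .
  have key: "g x (T y) = omega (a x) (b (a y))" if "x \<in> L1" "y \<in> L1" for x y
  proof -
    have "g x (T y) = - omega x (a (b (a y)))"
      unfolding g_def T_def linear_neg[OF la] omega_neg_right ..
    also have "\<dots> = - omega (b (a y)) (a x)" using symA[OF that(1), of "b (a y)"] bP[of "a y"] by simp
    also have "\<dots> = omega (a x) (b (a y))" using omega_skew[of "a x"] by simp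
    finally show ?thesis .
  qed
  have sa: "g x (T y) = g (T x) y" if "x \<in> L1" "y \<in> L1" for x y
  proof -
    have TxL: "T x \<in> L1" unfolding T_def using bP[of "a x"] subspace_neg[OF sub(1)] by blast
    have "g (T x) y = g y (T x)" using sym[OF TxL that(2)] .
    also have "\<dots> = omega (a y) (b (a x))" using key[OF that(2) that(1)] .
    also have "\<dots> = omega (a x) (b (a y))" using symB[of "a y" "a x"] aP[of x] aP[of y] by simp
    finally show ?thesis using key[OF that] by simp
  qed
  have pd: "g x x > 0" if "x \<in> L1" "x \<noteq> 0" for x
    using assms(9) that gm1 unfolding pos_def_on_def maslov_form_def g_def by simp
  have ca: "continuous_on UNIV a"
    using linear_continuous_on linear_conv_bounded_linear la by blast
  have cT: "continuous_on UNIV T"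
    using linear_continuous_on linear_conv_bounded_linear lT by blast
  have c1: "continuous_on UNIV (\<lambda>x. g x x)" unfolding g_def omega_def
    using continuous_on_diff[OF continuous_on_inner[OF continuous_on_fst[OF continuous_on_id] continuous_on_snd[OF ca]]
        continuous_on_inner[OF continuous_on_snd[OF continuous_on_id] continuous_on_fst[OF ca]]] by simp
  have c2: "continuous_on UNIV (\<lambda>x. g (T x) x)" unfolding g_def omega_def
    using continuous_on_diff[OF continuous_on_inner[OF continuous_on_fst[OF cT] continuous_on_snd[OF ca]]
        continuous_on_inner[OF continuous_on_snd[OF cT] continuous_on_fst[OF ca]]] by simp
  have TL: "T ` L1 \<subseteq> L1" unfolding T_def image_subset_iff using bP subspace_neg[OF sub(1)] by blast
  have cr: "cross_ratio L1 M1 L2 M2 v = T v" if "v \<in> L1" for v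
    unfolding cross_ratio_def T_def using gm1[OF that] gm2 aP by simp
  obtain B where B: "independent B" "span B = L1" "\<forall>b\<in>B. \<exists>c::real. T b = c *\<^sub>R b"
    using diag_lemma[OF lT gl gr sym sa pd c1 c2 sub(1) order_refl TL] by blast
  have BL: "B \<subseteq> L1" using B(2) span_superset by blast
  have part1: "diagonalizable_on L1 (cross_ratio L1 M1 L2 M2)"
    unfolding diagonalizable_on_def
  proof (intro exI[of _ B] conjI ballI)
    show "independent B" by (rule B(1))
    show "span B = L1" by (rule B(2))
    fix x assume xB: "x \<in> B"
    obtain k where k: "T x = k *\<^sub>R x" using B(3) xB by blast
    have "cross_ratio L1 M1 L2 M2 x = T x" using cr[of x] BL xB by blast
    thus "\<exists>c::real. cross_ratio L1 M1 L2 M2 x = c *\<^sub>R x" using k by (intro exI[of _ k]) simp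
  qed
  have part2: "c > 0" if h: "pos_def_on L2 (maslov_form L2 M2 L1)"
      and e: "eigenvalue_on L1 (cross_ratio L1 M1 L2 M2) c" for c
  proof -
    obtain v where v: "v \<in> L1" "v \<noteq> 0" "cross_ratio L1 M1 L2 M2 v = c *\<^sub>R v"
      using e unfolding eigenvalue_on_def by blast
    have Tv: "T v = c *\<^sub>R v" using v cr by simp
    have av: "a v \<noteq> 0"
    proof
      assume "a v = 0"
      hence "v \<in> M1" using aP[of v] by simp
      thus False using v assms(5) unfolding transverse_def by blast
    qed
    have "maslov_form L2 M2 L1 (a v) (a v) > 0" using h av aP unfolding pos_def_on_def by blast
    hence "omega (a v) (b (a v)) > 0" unfolding maslov_form_def using gm2 aP by simp
    hence "g v (T v) > 0" using key[OF v(1) v(1)] by simp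
    hence "c * g v v > 0" unfolding Tv using linear_scale[OF gl] by simp
    moreover have "g v v > 0" using pd v by blast
    ultimately show ?thesis by (simp add: zero_less_mult_iff)
  qed
  show ?thesis
  proof (intro conjI impI allI)
    show "diagonalizable_on L1 (cross_ratio L1 M1 L2 M2)" by (rule part1)
  next
    fix c assume "transverse M2 L2 \<and> pos_def_on L2 (maslov_form L2 M2 L1)"
      and "eigenvalue_on L1 (cross_ratio L1 M1 L2 M2) c"
    thus "c > 0" using part2 by simp
  qed
qed

end
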